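(* Let $\Omega$ be a finite-dimensional vector space over a finite field, $n=|\Omega|$, let $G\le\mathrm{AGL}(\Omega)$ be an affine group containing all translations of $\Omega$, and let $K$ be a one-point stabilizer of $G$, $k=|K|$. Suppose that $4(k-1)\,\mathrm{Fix}(K)<n$. Then $b(\mathrm{Inv}(G))\le 2$. In particular, this holds whenever $4k(k-1)f<n$ where $f=\mathrm{fix}(K)$.
   Context: For a permutation $g$, $\mathrm{fix}(g)$ is the number of its fixed points; for a set $K$ of permutations, $\mathrm{fix}(K)=\max\{\mathrm{fix}(g):g\in K\setminus\{1\}\}$ and $\mathrm{Fix}(K)=\sum_{g\in K\setminus\{1\}}\mathrm{fix}(g)$. $\mathrm{Inv}(G)=(\Omega,S)$ where $S$ is the set of orbits of $G$ on $\Omega\times\Omega$; this is a coherent configuration (its relations are unions of elements of $S$, its fibers are sets $\Gamma$ with $\{(\gamma,\gamma):\gamma\in\Gamma\}\in S$). A set $B\subseteq\Omega$ is a base of a coherent configuration $\mathcal X$ if the smallest coherent configuration on $\Omega$ whose relations include those of $\mathcal X$ and in which every $\{\beta\}$, $\beta\in B$, is a fiber has only singleton basic relations; $b(\mathcal X)$ is the minimal size of a base. *)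

theory Defs
  imports Main "HOL.Vector_Spaces"
begin

definition fixpts :: "('a \<Rightarrow> 'a) \<Rightarrow> nat" where
  "fixpts g = card {x. g x = x}"

definition fix_max :: "('a \<Rightarrow> 'a) set \<Rightarrow> nat" where
  "fix_max K = Max (fixpts ` (K - {id}))"

definition Fix_sum :: "('a \<Rightarrow> 'a) set \<Rightarrow> nat" where
  "Fix_sum K = (\<Sum>g\<in>K - {id}. fixpts g)"

definition coherent_config :: "'a set \<Rightarrow> ('a \<times> 'a) set set \<Rightarrow> bool" where
  "coherent_config \<Omega> S \<longleftrightarrow>
     finite \<Omega> \<and>
     (\<forall>s\<in>S. s \<noteq> {}) \<and> \<Union>S = \<Omega> \<times> \<Omega> \<and>
     (\<forall>s\<in>S. \<forall>t\<in>S. s \<noteq> t \<longrightarrow> s \<inter> t = {}) \<and>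
     (\<exists>T\<subseteq>S. \<Union>T = Id_on \<Omega>) \<and>
     (\<forall>s\<in>S. s\<inverse> \<in> S) \<and>
     (\<forall>r\<in>S. \<forall>s\<in>S. \<forall>t\<in>S. \<forall>x y x' y'. (x, y) \<in> t \<longrightarrow> (x', y') \<in> t \<longrightarrow>
        card {z. (x, z) \<in> r \<and> (z, y) \<in> s} = card {z. (x', z) \<in> r \<and> (z, y') \<in> s})"

definition cc_relations :: "('a \<times> 'a) set set \<Rightarrow> ('a \<times> 'a) set set" where
  "cc_relations S = {\<Union>T | T. T \<subseteq> S}"

definition is_fiber :: "('a \<times> 'a) set set \<Rightarrow> 'a set \<Rightarrow> bool" where
  "is_fiber S \<Gamma> \<longleftrightarrow> {(\<gamma>, \<gamma>) | \<gamma>. \<gamma> \<in> \<Gamma>} \<in> S"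

(* The relations of the smallest coherent configuration on \<Omega> whose relations include
   those of S and in which every singleton {\<beta>}, \<beta> \<in> B, is a fiber:
   intersection of the relation sets of all such coherent configurations. *)
definition point_extension_relations ::
    "'a set \<Rightarrow> ('a \<times> 'a) set set \<Rightarrow> 'a set \<Rightarrow> ('a \<times> 'a) set set" where
  "point_extension_relations \<Omega> S B =
     \<Inter>{cc_relations T | T. coherent_config \<Omega> T \<and> cc_relations S \<subseteq> cc_relations T \<and>
                           (\<forall>\<beta>\<in>B. is_fiber T {\<beta>})}"

(* B is a base: the above smallest configuration has only singleton basic relations,
   i.e. every binary relation on \<Omega> is one of its relations *)
definition is_base :: "'a set \<Rightarrow> ('a \<times> 'a) set set \<Rightarrow> 'a set \<Rightarrow> bool" where
  "is_base \<Omega> S B \<longleftrightarrow> B \<subseteq> \<Omega> \<and> point_extension_relations \<Omega> S B = Pow (\<Omega> \<times> \<Omega>)"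

definition base_number :: "'a set \<Rightarrow> ('a \<times> 'a) set set \<Rightarrow> nat" where
  "base_number \<Omega> S = Min (card ` {B. is_base \<Omega> S B})"

definition orbits2 :: "'a set \<Rightarrow> ('a \<Rightarrow> 'a) set \<Rightarrow> ('a \<times> 'a) set set" where
  "orbits2 \<Omega> G = {(\<lambda>g. (g x, g y)) ` G | x y. x \<in> \<Omega> \<and> y \<in> \<Omega>}"

definition perm_group :: "('a \<Rightarrow> 'a) set \<Rightarrow> bool" where
  "perm_group G \<longleftrightarrow> (\<forall>g\<in>G. bij g) \<and> id \<in> G \<and>
     (\<forall>g\<in>G. \<forall>h\<in>G. g \<circ> h \<in> G) \<and> (\<forall>g\<in>G. inv g \<in> G)"

definition AGL :: "('f::field \<Rightarrow> 'v::ab_group_add \<Rightarrow> 'v) \<Rightarrow> ('v \<Rightarrow> 'v) set" where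
  "AGL scale = {f. \<exists>A b. Vector_Spaces.linear scale scale A \<and> bij A \<and> (\<forall>x. f x = A x + b)}"

definition stabilizer :: "('a \<Rightarrow> 'a) set \<Rightarrow> 'a \<Rightarrow> ('a \<Rightarrow> 'a) set" where
  "stabilizer G \<omega> = {g \<in> G. g \<omega> = \<omega>}"

end

theory Submission
  imports Defs
begin

definition approx :: "('v::ab_group_add \<Rightarrow> 'v) set \<Rightarrow> 'v \<Rightarrow> 'v \<Rightarrow> 'v \<Rightarrow> bool" where
  "approx Ls u z w \<longleftrightarrow> (\<exists>L\<in>Ls. w - u = L (z - u))"

lemma sol_card:
  fixes L :: "'v::{ab_group_add,finite} \<Rightarrow> 'v"
  assumes hom: "\<forall>x y. L (x - y) = L x - L y"
  shows "card {u. u - L u = c} \<le> card {x. L x = x}"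
proof (cases "{u. u - L u = c} = {}")
  case True thus ?thesis by simp
next
  case False then obtain u0 where u0: "u0 - L u0 = c" by auto
  have "inj_on (\<lambda>u. u - u0) {u. u - L u = c}" by (auto simp: inj_on_def)
  moreover have "(\<lambda>u. u - u0) ` {u. u - L u = c} \<subseteq> {x. L x = x}"
  proof
    fix x assume "x \<in> (\<lambda>u. u - u0) ` {u. u - L u = c}"
    then obtain u where u: "u - L u = c" and x: "x = u - u0" by auto
    have "L x = L u - L u0" using hom x by simp
    also have "\<dots> = (u - c) - (u0 - c)" proof -
      have a: "L u = u - c" proof - have "u - (u - L u) = L u" by simp thus ?thesis using u by simp qed
      have b: "L u0 = u0 - c" proof - have "u0 - (u0 - L u0) = L u0" by simp thus ?thesis using u0 by simp qed
      show ?thesis using a b by simp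
    qed
    also have "\<dots> = x" using x by simp
    finally show "x \<in> {x. L x = x}" by simp
  qed
  ultimately show ?thesis by (rule card_inj_on_le) simp
qed

lemma fewbad:
  fixes Ls :: "('v::{ab_group_add,finite} \<Rightarrow> 'v) set"
  assumes hom: "\<forall>L\<in>Ls. \<forall>x y. L (x - y) = L x - L y" and zw: "z \<noteq> w"
  shows "card {u. approx Ls u z w} \<le> (\<Sum>L\<in>Ls - {id}. card {x. L x = x})"
proof -
  have "{u. approx Ls u z w} \<subseteq> (\<Union>L\<in>Ls - {id}. {u. u - L u = w - L z})"
  proof
    fix u assume "u \<in> {u. approx Ls u z w}"
    then obtain L where L: "L \<in> Ls" and e: "w - u = L (z - u)" by (auto simp: approx_def)
    have "L \<noteq> id" using e zw by auto
    moreover have "u - L u = w - L z" using e hom L by (simp add: algebra_simps)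
    ultimately show "u \<in> (\<Union>L\<in>Ls - {id}. {u. u - L u = w - L z})" using L by auto
  qed
  hence "card {u. approx Ls u z w} \<le> card (\<Union>L\<in>Ls - {id}. {u. u - L u = w - L z})"
    by (intro card_mono) auto
  also have "\<dots> \<le> (\<Sum>L\<in>Ls - {id}. card {u. u - L u = w - L z})"
    by (rule card_UN_le) auto
  also have "\<dots> \<le> (\<Sum>L\<in>Ls - {id}. card {x. L x = x})"
    by (rule sum_mono) (use hom in \<open>auto intro: sol_card\<close>)
  finally show ?thesis .
qed

lemma exists_good:
  fixes Ls :: "('v::{ab_group_add,finite} \<Rightarrow> 'v) set" and \<alpha> :: 'v
  assumes hom: "\<forall>L\<in>Ls. \<forall>x y. L (x - y) = L x - L y"
    and big: "(card (Ls - {id}) + 1) * (\<Sum>L\<in>Ls - {id}. card {x. L x = x}) < card (UNIV :: 'v set)"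
  shows "\<exists>\<beta>. (\<Sum>L\<in>Ls - {id}. card {x. L x = x})
              < card {z. \<forall>w. approx Ls \<alpha> z w \<and> approx Ls \<beta> z w \<longrightarrow> w = z}"
proof (rule ccontr)
  define F where "F = (\<Sum>L\<in>Ls - {id}. card {x. L x = x})"
  define m where "m = card (Ls - {id})"
  define n where "n = card (UNIV :: 'v set)"
  define Ub where "Ub = (\<lambda>\<beta>. {z. \<forall>w. approx Ls \<alpha> z w \<and> approx Ls \<beta> z w \<longrightarrow> w = z})"
  assume "\<not> ?thesis"
  hence small: "\<And>\<beta>. card (Ub \<beta>) \<le> F" unfolding F_def Ub_def by (auto simp: not_less)
  define Bad where "Bad = (SIGMA \<beta>:UNIV. - Ub \<beta>)"
  have cB: "card Bad = (\<Sum>\<beta>\<in>UNIV. card (- Ub \<beta>))" unfolding Bad_def by (rule card_SigmaI) auto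
  have "\<And>\<beta>. n - F \<le> card (- Ub \<beta>)"
  proof -
    fix \<beta>
    have "card (- Ub \<beta>) = n - card (Ub \<beta>)" unfolding n_def
      by (metis Compl_eq_Diff_UNIV card_Diff_subset finite subset_UNIV)
    thus "n - F \<le> card (- Ub \<beta>)" using small[of \<beta>] by simp
  qed
  hence "(\<Sum>\<beta>\<in>(UNIV::'v set). n - F) \<le> (\<Sum>\<beta>\<in>UNIV. card (- Ub \<beta>))" by (intro sum_mono) auto
  hence low: "n * (n - F) \<le> card Bad" using cB unfolding n_def by simp
  define P where "P = (\<lambda>L1 L2. {(\<beta>, z). \<beta> - L2 \<beta> = L1 (z - \<alpha>) + \<alpha> - L2 z})"
  have sub: "Bad \<subseteq> (\<Union>L1\<in>Ls - {id}. \<Union>L2\<in>Ls - {id}. P L1 L2)"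
  proof
    fix p assume "p \<in> Bad"
    then obtain \<beta> z where p: "p = (\<beta>, z)" and "z \<notin> Ub \<beta>" unfolding Bad_def by auto
    then obtain w where a1: "approx Ls \<alpha> z w" and a2: "approx Ls \<beta> z w" and wz: "w \<noteq> z"
      unfolding Ub_def by auto
    obtain L1 where L1: "L1 \<in> Ls" "w - \<alpha> = L1 (z - \<alpha>)" using a1 by (auto simp: approx_def)
    obtain L2 where L2: "L2 \<in> Ls" "w - \<beta> = L2 (z - \<beta>)" using a2 by (auto simp: approx_def)
    have "L1 \<noteq> id" using L1 wz by auto
    moreover have "L2 \<noteq> id" using L2 wz by auto
    moreover have "w = L1 (z - \<alpha>) + \<alpha>" using L1 by (simp add: algebra_simps)
    moreover have "w - \<beta> = L2 z - L2 \<beta>" using L2 hom by simp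
    ultimately have "L1 \<noteq> id" "L2 \<noteq> id" "\<beta> - L2 \<beta> = L1 (z - \<alpha>) + \<alpha> - L2 z"
      by (auto simp: algebra_simps)
    thus "p \<in> (\<Union>L1\<in>Ls - {id}. \<Union>L2\<in>Ls - {id}. P L1 L2)" using p L1 L2 unfolding P_def by auto
  qed
  have cP: "card (P L1 L2) \<le> n * card {x. L2 x = x}" if "L2 \<in> Ls" for L1 L2
  proof -
    have eq: "P L1 L2 = prod.swap ` (SIGMA z:UNIV. {\<beta>. \<beta> - L2 \<beta> = L1 (z - \<alpha>) + \<alpha> - L2 z})"
      unfolding P_def by auto
    have "card (P L1 L2) \<le> card (SIGMA z:(UNIV::'v set). {\<beta>. \<beta> - L2 \<beta> = L1 (z - \<alpha>) + \<alpha> - L2 z})"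
      unfolding eq by (rule card_image_le) simp
    also have "\<dots> = (\<Sum>z\<in>UNIV. card {\<beta>. \<beta> - L2 \<beta> = L1 (z - \<alpha>) + \<alpha> - L2 z})"
      by (rule card_SigmaI) auto
    also have "\<dots> \<le> (\<Sum>z\<in>(UNIV::'v set). card {x. L2 x = x})"
      by (rule sum_mono) (use hom that in \<open>auto intro: sol_card\<close>)
    also have "\<dots> = n * card {x. L2 x = x}" unfolding n_def by simp
    finally show ?thesis .
  qed
  have "card Bad \<le> card (\<Union>L1\<in>Ls - {id}. \<Union>L2\<in>Ls - {id}. P L1 L2)"
    using sub by (intro card_mono) auto
  also have "\<dots> \<le> (\<Sum>L1\<in>Ls - {id}. card (\<Union>L2\<in>Ls - {id}. P L1 L2))"
    by (rule card_UN_le) auto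
  also have "\<dots> \<le> (\<Sum>L1\<in>Ls - {id}. \<Sum>L2\<in>Ls - {id}. card (P L1 L2))"
    by (intro sum_mono card_UN_le) auto
  also have "\<dots> \<le> (\<Sum>L1\<in>Ls - {id}. \<Sum>L2\<in>Ls - {id}. n * card {x. L2 x = x})"
    by (intro sum_mono cP) auto
  also have "\<dots> = m * (n * F)" unfolding m_def F_def by (simp add: sum_distrib_left)
  finally have "card Bad \<le> m * (n * F)" .
  hence nn: "n * (n - F) \<le> n * (m * F)" using low by (metis le_trans mult.left_commute)
  have "0 < n" unfolding n_def by (simp add: finite_UNIV_card_ge_0)
  hence "n - F \<le> m * F" using nn by simp
  hence "n \<le> (m + 1) * F" by simp
  thus False using big unfolding m_def F_def n_def by simp
qed


definition eqv :: "('a \<times> 'a) set set \<Rightarrow> 'a \<Rightarrow> 'a \<Rightarrow> bool" where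
  "eqv T x x' \<longleftrightarrow> (\<exists>d\<in>T. (x, x) \<in> d \<and> (x', x') \<in> d)"

lemma ccA_fin: "coherent_config \<Omega> T \<Longrightarrow> finite \<Omega>" unfolding coherent_config_def by (elim conjE) assumption
lemma ccA_cov: "coherent_config \<Omega> T \<Longrightarrow> \<Union>T = \<Omega> \<times> \<Omega>" unfolding coherent_config_def by (elim conjE) assumption
lemma ccA_disj: "coherent_config \<Omega> T \<Longrightarrow> \<forall>s\<in>T. \<forall>t\<in>T. s \<noteq> t \<longrightarrow> s \<inter> t = {}" unfolding coherent_config_def by (elim conjE) assumption
lemma ccA_diag: "coherent_config \<Omega> T \<Longrightarrow> \<exists>T0\<subseteq>T. \<Union>T0 = Id_on \<Omega>" unfolding coherent_config_def by (elim conjE) assumption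
lemma ccA_inv: "coherent_config \<Omega> T \<Longrightarrow> \<forall>s\<in>T. s\<inverse> \<in> T" unfolding coherent_config_def by (elim conjE) assumption
lemma ccA_cnt: "coherent_config \<Omega> S \<Longrightarrow> (\<forall>r\<in>S. \<forall>s\<in>S. \<forall>t\<in>S. \<forall>x y x' y'. (x, y) \<in> t \<longrightarrow> (x', y') \<in> t \<longrightarrow>
        card {z. (x, z) \<in> r \<and> (z, y) \<in> s} = card {z. (x', z) \<in> r \<and> (z, y') \<in> s})"
  unfolding coherent_config_def by (elim conjE) assumption

lemma cc_disj: "coherent_config UNIV T \<Longrightarrow> s \<in> T \<Longrightarrow> t \<in> T \<Longrightarrow> p \<in> s \<Longrightarrow> p \<in> t \<Longrightarrow> s = t"
proof (rule ccontr)
  assume a: "coherent_config UNIV T" "s \<in> T" "t \<in> T" "p \<in> s" "p \<in> t" "s \<noteq> t"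
  hence "s \<inter> t = {}" using ccA_disj[OF a(1)] by simp
  thus False using a by blast
qed

lemma cc_cover: "coherent_config UNIV T \<Longrightarrow> \<exists>t\<in>T. p \<in> t"
proof -
  assume a: "coherent_config UNIV T"
  have "p \<in> \<Union>T" using ccA_cov[OF a] by simp
  thus ?thesis by (rule UnionE) blast
qed

lemma cc_diag:
  assumes cc: "coherent_config UNIV T" and d: "d \<in> T" "(x, x) \<in> d"
  shows "d \<subseteq> Id"
proof -
  obtain T0 where T0: "T0 \<subseteq> T" "\<Union>T0 = Id_on UNIV" using ccA_diag[OF cc] by blast
  then obtain d0 where "d0 \<in> T0" "(x, x) \<in> d0" by (metis Id_on_iff UNIV_I Union_iff)
  with cc_disj[OF cc] T0 d have "d0 = d" by blast
  hence "d \<subseteq> \<Union>T0" using \<open>d0 \<in> T0\<close> by blast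
  thus ?thesis using T0(2) by (auto simp: Id_on_def)
qed

lemma cc_count:
  assumes cc: "coherent_config UNIV T" and "r \<in> T" "s \<in> T" "t \<in> T" "(x, y) \<in> t" "(x', y') \<in> t"
  shows "card {z. (x, z) \<in> r \<and> (z, y) \<in> s} = card {z. (x', z) \<in> r \<and> (z, y') \<in> s}"
  using ccA_cnt[OF cc] assms(2-6) by blast

lemma cc_nonempty:
  assumes cc: "coherent_config UNIV (T :: ('a \<times> 'a) set set)" and "r \<in> T" "s \<in> T" "t \<in> T" "(x, y) \<in> t" "(x', y') \<in> t"
    and "(x, z) \<in> r" "(z, y) \<in> s"
  shows "\<exists>z'. (x', z') \<in> r \<and> (z', y') \<in> s"
proof -
  have fin: "finite (UNIV :: 'a set)" using ccA_fin[OF cc] .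
  have "card {z. (x, z) \<in> r \<and> (z, y) \<in> s} \<noteq> 0"
    using assms(7,8) fin by (metis (mono_tags, lifting) card_0_eq empty_iff finite_subset mem_Collect_eq subset_UNIV)
  hence "card {z. (x', z) \<in> r \<and> (z, y') \<in> s} \<noteq> 0" using cc_count[OF assms(1-6)] by simp
  thus ?thesis by (metis (mono_tags, lifting) card.empty Collect_empty_eq)
qed

lemma cc_first:
  assumes cc: "coherent_config UNIV T" and t: "t \<in> T" "(x, y) \<in> t" "(x', y') \<in> t"
  shows "eqv T x x'"
proof -
  obtain d where d: "d \<in> T" "(x, x) \<in> d" using cc_cover[OF cc] by blast
  obtain z where z: "(x', z) \<in> d" "(z, y') \<in> t" using cc_nonempty[OF cc d(1) t(1) t d(2) t(2)] by blast
  have "z = x'" using cc_diag[OF cc d] z by auto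
  thus ?thesis using d z unfolding eqv_def by auto
qed

lemma cc_second:
  assumes cc: "coherent_config UNIV T" and t: "t \<in> T" "(x, y) \<in> t" "(x', y') \<in> t"
  shows "eqv T y y'"
proof -
  have "t\<inverse> \<in> T" using ccA_inv[OF cc] t by blast
  thus ?thesis using cc_first[OF cc, of "t\<inverse>" y x y' x'] t by auto
qed

lemma cc_single:
  assumes cc: "coherent_config UNIV T" and u: "{(u, u)} \<in> T" and t: "t \<in> T" "(u, x) \<in> t"
    and e: "eqv T x x'"
  shows "(u, x') \<in> t"
proof -
  obtain d where d: "d \<in> T" "(x, x) \<in> d" "(x', x') \<in> d" using e unfolding eqv_def by blast
  have ti: "t\<inverse> \<in> T" using ccA_inv[OF cc] t by blast
  obtain z where z: "(x', z) \<in> t\<inverse>" "(z, x') \<in> t"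
    using cc_nonempty[OF cc ti t(1) d(1) d(2) d(3), of u] t by auto
  have "eqv T u z" using cc_first[OF cc t(1) t(2) z(2)] .
  then obtain d' where d': "d' \<in> T" "(u, u) \<in> d'" "(z, z) \<in> d'" unfolding eqv_def by blast
  have "d' = {(u, u)}" using cc_disj[OF cc d'(1) u d'(2)] by simp
  hence "z = u" using d' by auto
  thus ?thesis using z by simp
qed

lemma cc_refine:
  assumes cc: "coherent_config UNIV T" and sub: "cc_relations S \<subseteq> cc_relations T"
    and t: "t \<in> T" "(u, y) \<in> t" "(u, y') \<in> t" and R: "R \<in> S" "(u, y) \<in> R"
  shows "(u, y') \<in> R"
proof -
  have "R \<in> cc_relations S" unfolding cc_relations_def using R by (auto intro!: exI[of _ "{R}"])
  hence "R \<in> cc_relations T" using sub by blast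
  then obtain T1 where T1: "T1 \<subseteq> T" "R = \<Union>T1" unfolding cc_relations_def by blast
  then obtain t1 where "t1 \<in> T1" "(u, y) \<in> t1" using R by blast
  hence "t1 = t" using cc_disj[OF cc _ t(1) _ t(2)] T1 by blast
  thus ?thesis using T1 \<open>t1 \<in> T1\<close> t by blast
qed

lemma orbit_elt:
  assumes pg: "perm_group G" and R: "R \<in> orbits2 UNIV G" "(u, y) \<in> R" "(u, y') \<in> R"
  shows "\<exists>g\<in>G. g u = u \<and> g y = y'"
proof -
  obtain x0 y0 where R': "R = (\<lambda>g. (g x0, g y0)) ` G" using R unfolding orbits2_def by blast
  obtain g1 where g1: "g1 \<in> G" "u = g1 x0" "y = g1 y0" using R(2) R' by auto
  obtain g2 where g2: "g2 \<in> G" "u = g2 x0" "y' = g2 y0" using R(3) R' by auto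
  have b: "bij g1" using pg g1 unfolding perm_group_def by blast
  have "inv g1 \<in> G" using pg g1 unfolding perm_group_def by blast
  hence "g2 \<circ> inv g1 \<in> G" using pg g2 unfolding perm_group_def by blast
  moreover have "inv g1 u = x0" "inv g1 y = y0" using b g1 by (auto simp: bij_is_inj inv_f_f)
  ultimately show ?thesis using g2 by (intro bexI[of _ "g2 \<circ> inv g1"]) auto
qed

lemma orbit_cover:
  assumes pg: "perm_group G"
  shows "\<exists>R\<in>orbits2 UNIV G. (u, y) \<in> R"
proof -
  have "id \<in> G" using pg unfolding perm_group_def by blast
  hence "(u, y) \<in> (\<lambda>g. (g u, g y)) ` G" using image_eqI[of "(u,y)" "\<lambda>g. (g u, g y)" id G] by simp
  thus ?thesis unfolding orbits2_def by blast
qed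


lemma Lmap_hom:
  fixes g :: "'v::ab_group_add \<Rightarrow> 'v" and scale :: "'f::field \<Rightarrow> 'v \<Rightarrow> 'v"
  assumes "g \<in> AGL scale" "g \<omega> = \<omega>"
  shows "g ((x - y) + \<omega>) - \<omega> = (g (x + \<omega>) - \<omega>) - (g (y + \<omega>) - \<omega>)"
proof -
  obtain A b where A: "Vector_Spaces.linear scale scale A" "\<forall>x. g x = A x + b"
    using assms(1) unfolding AGL_def by blast
  have d: "\<And>p q. A (p - q) = A p - A q" using A(1) by (metis linear_def module_hom.diff)
  have e1: "A (x - y) = A (x - y + \<omega>) - A \<omega>" using d[of "x - y + \<omega>" \<omega>] by simp
  have e2: "A (x - y) = A (x + \<omega>) - A (y + \<omega>)" using d[of "x + \<omega>" "y + \<omega>"] by simp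
  have e3: "A \<omega> + b = \<omega>" using assms(2) A(2) by simp
  have "A (x - y + \<omega>) = A (x + \<omega>) - A (y + \<omega>) + A \<omega>" using e1 e2 by (simp add: algebra_simps)
  thus ?thesis using A(2) e3 by (simp add: algebra_simps)
qed

lemma approx_from_G:
  fixes G :: "('v::ab_group_add \<Rightarrow> 'v) set"
  assumes pg: "perm_group G" and tr: "\<forall>b. (\<lambda>x. x + b) \<in> G"
    and g: "g \<in> G" "g u = u" "g y = y'"
  shows "approx ((\<lambda>g. \<lambda>x. g (x + \<omega>) - \<omega>) ` stabilizer G \<omega>) u y y'"
proof -
  define h where "h = (\<lambda>x. x + (\<omega> - u)) \<circ> g \<circ> (\<lambda>x. x + (u - \<omega>))"
  have "h \<in> G" unfolding h_def using pg tr g unfolding perm_group_def by blast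
  moreover have "h \<omega> = \<omega>" unfolding h_def using g by simp
  ultimately have hK: "h \<in> stabilizer G \<omega>" unfolding stabilizer_def by simp
  have "h (y - u + \<omega>) - \<omega> = y' - u" unfolding h_def using g by (simp add: algebra_simps)
  thus ?thesis unfolding approx_def using hK by force
qed

theorem corollary8p2:
  fixes scale :: "'f::{field,finite} \<Rightarrow> 'v::{ab_group_add,finite} \<Rightarrow> 'v"
    and G :: "('v \<Rightarrow> 'v) set"
    and \<omega> :: 'v
  assumes "vector_space scale"
    and "perm_group G"
    and "G \<subseteq> AGL scale"
    and "\<forall>b. (\<lambda>x. x + b) \<in> G"
  shows "(4 * (card (stabilizer G \<omega>) - 1) * Fix_sum (stabilizer G \<omega>) < card (UNIV :: 'v set)
            \<longrightarrow> base_number UNIV (orbits2 UNIV G) \<le> 2)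
       \<and> (4 * card (stabilizer G \<omega>) * (card (stabilizer G \<omega>) - 1) * fix_max (stabilizer G \<omega>)
            < card (UNIV :: 'v set)
            \<longrightarrow> base_number UNIV (orbits2 UNIV G) \<le> 2)"
proof -
  note pg = assms(2) and tr = assms(4)
  define K where "K = stabilizer G \<omega>"
  define Lm where "Lm = (\<lambda>g::'v\<Rightarrow>'v. \<lambda>x. g (x + \<omega>) - \<omega>)"
  define Ls where "Ls = Lm ` K"
  define S where "S = orbits2 UNIV G"
  have idG: "id \<in> G" using pg unfolding perm_group_def by blast
  have idK: "id \<in> K" unfolding K_def stabilizer_def using idG by simp
  have hom: "\<forall>L\<in>Ls. \<forall>x y. L (x - y) = L x - L y"
  proof (intro ballI allI)
    fix L x y assume "L \<in> Ls"
    then obtain g where g: "g \<in> K" "L = Lm g" unfolding Ls_def by blast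
    have "g \<in> AGL scale" "g \<omega> = \<omega>" using g assms(3) unfolding K_def stabilizer_def by auto
    thus "L (x - y) = L x - L y" using Lmap_hom g(2) unfolding Lm_def by blast
  qed
  have inj: "inj Lm"
  proof (rule injI)
    fix g g' assume a: "Lm g = Lm g'"
    show "g = g'"
    proof
      fix z
      have "Lm g (z - \<omega>) = Lm g' (z - \<omega>)" using a by simp
      thus "g z = g' z" unfolding Lm_def by simp
    qed
  qed
  have Lid: "Lm id = id" unfolding Lm_def by (simp add: fun_eq_iff)
  have Ls0: "Ls - {id} = Lm ` (K - {id})"
    unfolding Ls_def using inj Lid by (simp add: image_set_diff)
  have fixeq: "\<And>g. card {x. Lm g x = x} = fixpts g"
  proof -
    fix g :: "'v \<Rightarrow> 'v"
    have "{x. g x = x} = (\<lambda>y. y + \<omega>) ` {x. Lm g x = x}"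
    proof
      show "{x. g x = x} \<subseteq> (\<lambda>y. y + \<omega>) ` {x. Lm g x = x}"
      proof
        fix x assume "x \<in> {x. g x = x}"
        hence "x - \<omega> \<in> {x. Lm g x = x}" unfolding Lm_def by simp
        thus "x \<in> (\<lambda>y. y + \<omega>) ` {x. Lm g x = x}" by (rule rev_image_eqI) simp
      qed
      show "(\<lambda>y. y + \<omega>) ` {x. Lm g x = x} \<subseteq> {x. g x = x}"
        unfolding Lm_def by (auto simp: algebra_simps)
    qed
    moreover have "inj (\<lambda>y::'v. y + \<omega>)" by (simp add: inj_on_def)
    ultimately show "card {x. Lm g x = x} = fixpts g" unfolding fixpts_def
      by (simp add: card_image inj_on_subset)
  qed
  have Fsum: "Fix_sum K = (\<Sum>L\<in>Ls - {id}. card {x. L x = x})"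
    unfolding Ls0 Fix_sum_def using inj
    by (simp add: sum.reindex inj_on_subset fixeq)
  have mcard: "card (Ls - {id}) = card K - 1"
    unfolding Ls0 using inj idK by (simp add: card_image inj_on_subset)
  have appr: "\<And>g u y y'. g \<in> G \<Longrightarrow> g u = u \<Longrightarrow> g y = y' \<Longrightarrow> approx Ls u y y'"
    unfolding Ls_def Lm_def K_def using approx_from_G[OF pg tr] by blast
  have main: "base_number UNIV S \<le> 2"
    if big: "Fix_sum K < card {z. \<forall>w. approx Ls \<omega> z w \<and> approx Ls \<beta> z w \<longrightarrow> w = z}" for \<beta>
  proof -
    define Ub where "Ub = {z. \<forall>w. approx Ls \<omega> z w \<and> approx Ls \<beta> z w \<longrightarrow> w = z}"
    have disc: "\<forall>x y. {(x, y)} \<in> T"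
      if cc: "coherent_config UNIV T" and sub: "cc_relations S \<subseteq> cc_relations T"
        and f1: "is_fiber T {\<omega>}" and f2: "is_fiber T {\<beta>}" for T
    proof -
      have sing: "{(u, u)} \<in> T" if "is_fiber T {u}" for u
      proof -
        have "{(\<gamma>, \<gamma>) | \<gamma>. \<gamma> \<in> {u}} = {(u, u)}" by auto
        thus ?thesis using that unfolding is_fiber_def by simp
      qed
      have key: "approx Ls u y y'" if u: "{(u, u)} \<in> T" and e: "eqv T y y'" for u y y'
      proof -
        obtain t where t: "t \<in> T" "(u, y) \<in> t" using cc_cover[OF cc] by blast
        have t2: "(u, y') \<in> t" using cc_single[OF cc u t e] .
        obtain R where R: "R \<in> S" "(u, y) \<in> R" using orbit_cover[OF pg] unfolding S_def by blast
        have "(u, y') \<in> R" using cc_refine[OF cc sub t(1) t(2) t2 R] .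
        then obtain g where "g \<in> G" "g u = u" "g y = y'"
          using orbit_elt[OF pg _ R(2)] R(1) unfolding S_def by blast
        thus ?thesis using appr by blast
      qed
      have sw: "{(\<omega>, \<omega>)} \<in> T" "{(\<beta>, \<beta>)} \<in> T" using sing f1 f2 by auto
      have inU: "{(z, z)} \<in> T" if z: "z \<in> Ub" for z
      proof -
        obtain d where d: "d \<in> T" "(z, z) \<in> d" using cc_cover[OF cc] by blast
        have dI: "d \<subseteq> Id" using cc_diag[OF cc d] .
        have "d \<subseteq> {(z, z)}"
        proof
          fix p assume p: "p \<in> d"
          then obtain z' where pz: "p = (z', z')" using dI by auto
          have "eqv T z z'" unfolding eqv_def using d p pz by blast
          hence "approx Ls \<omega> z z'" "approx Ls \<beta> z z'" using key sw by auto
          hence "z' = z" using z unfolding Ub_def by blast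
          thus "p \<in> {(z, z)}" using pz by simp
        qed
        hence "d = {(z, z)}" using d by blast
        thus ?thesis using d by simp
      qed
      have eq: "z = w" if e: "eqv T z w" for z w
      proof (rule ccontr)
        assume zw: "z \<noteq> w"
        have "card {u. approx Ls u z w} \<le> Fix_sum K" using fewbad[OF hom zw] Fsum by simp
        hence "card {u. approx Ls u z w} < card Ub" using big unfolding Ub_def by simp
        hence "\<not> Ub \<subseteq> {u. approx Ls u z w}" by (metis card_mono finite leD)
        then obtain u where "u \<in> Ub" "\<not> approx Ls u z w" by blast
        thus False using key[OF inU e] by blast
      qed
      show ?thesis
      proof (intro allI)
        fix x y
        obtain t where t: "t \<in> T" "(x, y) \<in> t" using cc_cover[OF cc] by blast
        have "t \<subseteq> {(x, y)}"
        proof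
          fix p assume p: "p \<in> t"
          obtain x' y' where pp: "p = (x', y')" by (cases p)
          have "x = x'" using eq cc_first[OF cc t(1) t(2)] p pp by blast
          moreover have "y = y'" using eq cc_second[OF cc t(1) t(2)] p pp by blast
          ultimately show "p \<in> {(x, y)}" using pp by simp
        qed
        hence "t = {(x, y)}" using t by blast
        thus "{(x, y)} \<in> T" using t by simp
      qed
    qed
    have allrel: "cc_relations T = Pow (UNIV \<times> UNIV)"
      if "coherent_config UNIV T" "cc_relations S \<subseteq> cc_relations T" "\<forall>b\<in>{\<omega>, \<beta>}. is_fiber T {b}" for T
    proof -
      have d: "\<forall>x y. {(x, y)} \<in> T" using disc that by simp
      have "R \<in> cc_relations T" for R
      proof -
        have "R = \<Union>((\<lambda>p. {p}) ` R)" by blast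
        moreover have "(\<lambda>p. {p}) ` R \<subseteq> T" using d by auto
        ultimately show ?thesis unfolding cc_relations_def by blast
      qed
      thus ?thesis by auto
    qed
    have base: "is_base UNIV S {\<omega>, \<beta>}"
      unfolding is_base_def point_extension_relations_def
    proof (intro conjI)
      show "\<Inter>{cc_relations T | T. coherent_config UNIV T \<and> cc_relations S \<subseteq> cc_relations T \<and>
                           (\<forall>b\<in>{\<omega>, \<beta>}. is_fiber T {b})} = Pow (UNIV \<times> UNIV)"
        using allrel by auto
    qed simp
    have fin: "finite (card ` {B. is_base UNIV S B})" by simp
    have "base_number UNIV S \<le> card {\<omega>, \<beta>}"
      unfolding base_number_def using base fin by (intro Min_le) auto
    also have "\<dots> \<le> 2" by (cases "\<omega> = \<beta>") auto
    finally show ?thesis .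
  qed
  have P1: "base_number UNIV S \<le> 2" if h: "4 * (card K - 1) * Fix_sum K < card (UNIV :: 'v set)"
  proof -
    define m where "m = card K - 1"
    define F where "F = Fix_sum K"
    have "(m + 1) * F < card (UNIV :: 'v set)"
    proof (cases "m = 0")
      case True
      hence e: "Ls - {id} = {}" using mcard m_def by (simp add: card_eq_0_iff)
      have "F = 0" unfolding F_def Fsum e by simp
      thus ?thesis by (simp add: finite_UNIV_card_ge_0)
    next
      case False
      hence "m + 1 \<le> 4 * m" by simp
      hence "(m + 1) * F \<le> (4 * m) * F" by (rule mult_le_mono1)
      moreover have "4 * m * F < card (UNIV :: 'v set)" using h unfolding m_def F_def .
      ultimately show ?thesis by (rule le_less_trans)
    qed
    hence "(card (Ls - {id}) + 1) * (\<Sum>L\<in>Ls - {id}. card {x. L x = x}) < card (UNIV :: 'v set)"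
      unfolding m_def F_def mcard Fsum .
    then obtain \<beta> where "(\<Sum>L\<in>Ls - {id}. card {x. L x = x})
              < card {z. \<forall>w. approx Ls \<omega> z w \<and> approx Ls \<beta> z w \<longrightarrow> w = z}"
      using exists_good[OF hom] by blast
    thus ?thesis using main Fsum by simp
  qed
  have Fle: "Fix_sum K \<le> (card K - 1) * fix_max K"
  proof (cases "K - {id} = {}")
    case True thus ?thesis unfolding Fix_sum_def by (simp only: sum.empty)
  next
    case False
    have "Fix_sum K \<le> card (K - {id}) * fix_max K"
      unfolding Fix_sum_def fix_max_def
      by (rule sum_bounded_above[where 'a = nat, simplified]) (simp add: Max_ge)
    thus ?thesis using idK by simp
  qed
  have C2: "4 * (card K - 1) * Fix_sum K \<le> 4 * card K * (card K - 1) * fix_max K"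
  proof -
    have "(card K - 1) * Fix_sum K \<le> (card K - 1) * ((card K - 1) * fix_max K)"
      using Fle by (rule mult_le_mono2)
    also have "\<dots> \<le> card K * ((card K - 1) * fix_max K)" by (rule mult_le_mono1) simp
    finally show ?thesis by (simp add: mult.assoc mult.left_commute)
  qed
  show ?thesis using P1 C2 unfolding K_def S_def by (meson le_less_trans)
qed

end
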